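(* Let $\psi$ be an $\mathcal{L}_\nu$-formula that is positive in $X$. Then for every belief model $(\Omega,\dots)$ for a game $G$, the operator $E\mapsto[\![\psi]\!]_E$ on $\mathcal P(\Omega)$ is monotonic; consequently $[\![\nu X.\psi]\!]=\bigcup\{E\subseteq\Omega: E\subseteq[\![\psi]\!]_E\}$.
   Context: Game, restrictions, $\mathcal{L}_O$, optimality conditions: $G=(T_1,\dots,T_n,<_1,\dots,<_n)$, $\ge_i$ reflexive closure of $<_i$; an optimality condition for $i$ is a closed first-order formula over atoms $C(a)$, $a\ge^i_cb$, constant $o$, interpreted in $(G,G',s)$ by $C(x)$ iff $\alpha(x)_j\in G'_j\ \forall j$ and $x\ge^i_zy$ iff $(\alpha(x)_i,\alpha(z)_{-i})\ge_i(\alpha(y)_i,\alpha(z)_{-i})$ ($o\mapsto s$); positive if all $C(\cdot)$ occur under an even number of negations. Belief model $(\Omega,\bar s_1,\dots,\bar s_n,P_1,\dots,P_n)$, $\bar s_i:\Omega\to T_i$, $P_i:\Omega\to2^\Omega$, $(G_E)_i=\{\bar s_i(u):u\in E\}$. $\mathcal{L}_\nu$: $\psi::=\mathit{rat}_{\phi_i}\mid X\mid\psi\wedge\psi\mid\neg\psi\mid\Box_i\psi\mid O_{\phi_i}\psi\mid\nu X.\psi$ ($\nu$-free body). Semantics: $[\![\mathit{rat}_{\phi_i}]\!]_E=\{\omega:(G,G_{P_i(\omega)},\bar s(\omega))\models\phi_i\}$, $[\![X]\!]_E=E$, intersections/complements, $[\![\Box_i\psi]\!]_E=\{\omega:P_i(\omega)\subseteq[\![\psi]\!]_E\}$,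 $[\![O_{\phi_i}\psi]\!]_E=\{\omega:(G,G_{[\![\psi]\!]_E},\bar s(\omega))\models\phi_i\}$, $[\![\nu X.\psi]\!]_E$ = outcome of transfinite iteration from $\Omega$ of $F\mapsto[\![\psi]\!]_F\cap F$ (intersections at limits). $\psi$ is positive in $X$ if each occurrence of $X$ is under an even number of negations and inside $O_{\phi_i}$ only when $\phi_i$ is positive. *)

theory Defs
  imports Main
begin

text \<open>A game with players of a finite type 'p. All strategies live in one
  ambient type 's; player i's strategy set is strats G i. A strategy profile
  is a function 'p => 's. pref G i s t means s <_i t.\<close>

record ('p, 's) game =
  strats :: "'p \<Rightarrow> 's set"
  pref   :: "'p \<Rightarrow> ('p \<Rightarrow> 's) \<Rightarrow> ('p \<Rightarrow> 's) \<Rightarrow> bool"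

definition profiles :: "('p, 's) game \<Rightarrow> ('p \<Rightarrow> 's) set" where
  "profiles G = {s. \<forall>j. s j \<in> strats G j}"

definition pref_geq :: "('p, 's) game \<Rightarrow> 'p \<Rightarrow> ('p \<Rightarrow> 's) \<Rightarrow> ('p \<Rightarrow> 's) \<Rightarrow> bool" where
  "pref_geq G i s t \<longleftrightarrow> pref G i t s \<or> s = t"

datatype oterm = OVar nat | OConst

text \<open>OGeq i c a b is the atom a >=^i_c b.\<close>
datatype 'p oform =
    OC oterm
  | OGeq 'p oterm oterm oterm
  | ONot "'p oform"
  | OAnd "'p oform" "'p oform"
  | OEx nat "'p oform"

fun oterm_vars :: "oterm \<Rightarrow> nat set" where
  "oterm_vars (OVar x) = {x}"
| "oterm_vars OConst = {}"

fun ofree :: "'p oform \<Rightarrow> nat set" where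
  "ofree (OC a) = oterm_vars a"
| "ofree (OGeq i c a b) = oterm_vars c \<union> oterm_vars a \<union> oterm_vars b"
| "ofree (ONot f) = ofree f"
| "ofree (OAnd f g) = ofree f \<union> ofree g"
| "ofree (OEx x f) = ofree f - {x}"

fun oplayers :: "'p oform \<Rightarrow> 'p set" where
  "oplayers (OC a) = {}"
| "oplayers (OGeq i c a b) = {i}"
| "oplayers (ONot f) = oplayers f"
| "oplayers (OAnd f g) = oplayers f \<union> oplayers g"
| "oplayers (OEx x f) = oplayers f"

definition opt_cond :: "'p \<Rightarrow> 'p oform \<Rightarrow> bool" where
  "opt_cond i f \<longleftrightarrow> ofree f = {} \<and> oplayers f \<subseteq> {i}"

text \<open>Positivity: every C-atom occurs under an even number of negations.\<close>
fun opos :: "'p oform \<Rightarrow> bool" and oneg :: "'p oform \<Rightarrow> bool" where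
  "opos (OC a) = True"
| "oneg (OC a) = False"
| "opos (OGeq i c a b) = True"
| "oneg (OGeq i c a b) = True"
| "opos (ONot f) = oneg f"
| "oneg (ONot f) = opos f"
| "opos (OAnd f g) = (opos f \<and> opos g)"
| "oneg (OAnd f g) = (oneg f \<and> oneg g)"
| "opos (OEx x f) = opos f"
| "oneg (OEx x f) = oneg f"

fun oeval :: "(nat \<Rightarrow> ('p \<Rightarrow> 's)) \<Rightarrow> ('p \<Rightarrow> 's) \<Rightarrow> oterm \<Rightarrow> ('p \<Rightarrow> 's)" where
  "oeval \<alpha> s (OVar x) = \<alpha> x"
| "oeval \<alpha> s OConst = s"

fun osat :: "('p, 's) game \<Rightarrow> ('p \<Rightarrow> 's set) \<Rightarrow> ('p \<Rightarrow> 's)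
    \<Rightarrow> (nat \<Rightarrow> ('p \<Rightarrow> 's)) \<Rightarrow> 'p oform \<Rightarrow> bool" where
  "osat G G' s \<alpha> (OC a) = (\<forall>j. oeval \<alpha> s a j \<in> G' j)"
| "osat G G' s \<alpha> (OGeq i c a b) =
     pref_geq G i ((oeval \<alpha> s c)(i := oeval \<alpha> s a i)) ((oeval \<alpha> s c)(i := oeval \<alpha> s b i))"
| "osat G G' s \<alpha> (ONot f) = (\<not> osat G G' s \<alpha> f)"
| "osat G G' s \<alpha> (OAnd f g) = (osat G G' s \<alpha> f \<and> osat G G' s \<alpha> g)"
| "osat G G' s \<alpha> (OEx x f) = (\<exists>t \<in> profiles G. osat G G' s (\<alpha>(x := t)) f)"

text \<open>(G, G', s) |= phi for a closed formula phi (the assignment is irrelevant).\<close>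
definition omodels :: "('p, 's) game \<Rightarrow> ('p \<Rightarrow> 's set) \<Rightarrow> ('p \<Rightarrow> 's) \<Rightarrow> 'p oform \<Rightarrow> bool" where
  "omodels G G' s f \<longleftrightarrow> osat G G' s (\<lambda>_. s) f"

definition belief_model :: "('p, 's) game \<Rightarrow> 'w set \<Rightarrow> ('p \<Rightarrow> 'w \<Rightarrow> 's) \<Rightarrow> ('p \<Rightarrow> 'w \<Rightarrow> 'w set) \<Rightarrow> bool" where
  "belief_model G Om sb P \<longleftrightarrow>
     (\<forall>i. \<forall>\<omega>\<in>Om. sb i \<omega> \<in> strats G i) \<and> (\<forall>i. \<forall>\<omega>\<in>Om. P i \<omega> \<subseteq> Om)"

definition restr :: "('p \<Rightarrow> 'w \<Rightarrow> 's) \<Rightarrow> 'w set \<Rightarrow> ('p \<Rightarrow> 's set)" where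
  "restr sb E = (\<lambda>i. sb i ` E)"

definition sprof :: "('p \<Rightarrow> 'w \<Rightarrow> 's) \<Rightarrow> 'w \<Rightarrow> ('p \<Rightarrow> 's)" where
  "sprof sb \<omega> = (\<lambda>i. sb i \<omega>)"

datatype 'p lnu =
    Rat 'p "'p oform"
  | X
  | And "'p lnu" "'p lnu"
  | Not "'p lnu"
  | Box 'p "'p lnu"
  | Opt 'p "'p oform" "'p lnu"
  | Nu "'p lnu"

fun nu_free :: "'p lnu \<Rightarrow> bool" where
  "nu_free (Rat i f) = True"
| "nu_free X = True"
| "nu_free (And a b) = (nu_free a \<and> nu_free b)"
| "nu_free (Not a) = nu_free a"
| "nu_free (Box i a) = nu_free a"
| "nu_free (Opt i f a) = nu_free a"
| "nu_free (Nu a) = False"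

fun lnu_formula :: "'p lnu \<Rightarrow> bool" where
  "lnu_formula (Rat i f) = opt_cond i f"
| "lnu_formula X = True"
| "lnu_formula (And a b) = (lnu_formula a \<and> lnu_formula b)"
| "lnu_formula (Not a) = lnu_formula a"
| "lnu_formula (Box i a) = lnu_formula a"
| "lnu_formula (Opt i f a) = (opt_cond i f \<and> lnu_formula a)"
| "lnu_formula (Nu a) = (nu_free a \<and> lnu_formula a)"

text \<open>Free occurrence of X (occurrences inside nu X. _ are bound).\<close>
fun occX :: "'p lnu \<Rightarrow> bool" where
  "occX (Rat i f) = False"
| "occX X = True"
| "occX (And a b) = (occX a \<or> occX b)"
| "occX (Not a) = occX a"
| "occX (Box i a) = occX a"
| "occX (Opt i f a) = occX a"
| "occX (Nu a) = False"

text \<open>posX: every free occurrence of X is under an even number of negations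
  and lies inside O_phi only if phi is positive; negX: same with odd.\<close>
fun posX :: "'p lnu \<Rightarrow> bool" and negX :: "'p lnu \<Rightarrow> bool" where
  "posX (Rat i f) = True"
| "negX (Rat i f) = True"
| "posX X = True"
| "negX X = False"
| "posX (And a b) = (posX a \<and> posX b)"
| "negX (And a b) = (negX a \<and> negX b)"
| "posX (Not a) = negX a"
| "negX (Not a) = posX a"
| "posX (Box i a) = posX a"
| "negX (Box i a) = negX a"
| "posX (Opt i f a) = (posX a \<and> (occX a \<longrightarrow> opos f))"
| "negX (Opt i f a) = (negX a \<and> (occX a \<longrightarrow> opos f))"
| "posX (Nu a) = True"
| "negX (Nu a) = True"

text \<open>Transfinite iteration from Om of a map f, with intersections at limits.
  Its stages form the least family containing Om, closed under f and under
  intersections of nonempty subfamilies; for the deflationary maps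
  F |-> g F \<inter> F used below the outcome of the iteration is the least stage,
  i.e. the intersection of all stages.\<close>
inductive_set iter_stages :: "('w set \<Rightarrow> 'w set) \<Rightarrow> 'w set \<Rightarrow> 'w set set"
  for f :: "'w set \<Rightarrow> 'w set" and Om :: "'w set" where
  start: "Om \<in> iter_stages f Om"
| step: "F \<in> iter_stages f Om \<Longrightarrow> f F \<in> iter_stages f Om"
| limit: "S \<in> Pow (iter_stages f Om) \<Longrightarrow> S \<noteq> {} \<Longrightarrow> \<Inter>S \<in> iter_stages f Om"

definition iter_outcome :: "('w set \<Rightarrow> 'w set) \<Rightarrow> 'w set \<Rightarrow> 'w set" where
  "iter_outcome f Om = \<Inter>(iter_stages f Om)"

fun sem :: "('p, 's) game \<Rightarrow> 'w set \<Rightarrow> ('p \<Rightarrow> 'w \<Rightarrow> 's) \<Rightarrow> ('p \<Rightarrow> 'w \<Rightarrow> 'w set)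
    \<Rightarrow> 'w set \<Rightarrow> 'p lnu \<Rightarrow> 'w set" where
  "sem G Om sb P E (Rat i f) = {\<omega>\<in>Om. omodels G (restr sb (P i \<omega>)) (sprof sb \<omega>) f}"
| "sem G Om sb P E X = E"
| "sem G Om sb P E (And a b) = sem G Om sb P E a \<inter> sem G Om sb P E b"
| "sem G Om sb P E (Not a) = Om - sem G Om sb P E a"
| "sem G Om sb P E (Box i a) = {\<omega>\<in>Om. P i \<omega> \<subseteq> sem G Om sb P E a}"
| "sem G Om sb P E (Opt i f a) = {\<omega>\<in>Om. omodels G (restr sb (sem G Om sb P E a)) (sprof sb \<omega>) f}"
| "sem G Om sb P E (Nu a) = iter_outcome (\<lambda>F. sem G Om sb P F a \<inter> F) Om"

end

theory Submission
  imports Defs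
begin

lemma osat_mono:
  "(opos f \<longrightarrow> (\<forall>j. G1 j \<subseteq> G2 j) \<longrightarrow> osat G G1 s \<alpha> f \<longrightarrow> osat G G2 s \<alpha> f) \<and>
   (oneg f \<longrightarrow> (\<forall>j. G1 j \<subseteq> G2 j) \<longrightarrow> osat G G2 s \<alpha> f \<longrightarrow> osat G G1 s \<alpha> f)"
  by (induction f arbitrary: \<alpha>) auto

lemma sem_noocc: "\<not> occX a \<Longrightarrow> sem G Om sb P E a = sem G Om sb P E' a"
  by (induction a) auto

lemma sem_mono:
  "E \<subseteq> E' \<Longrightarrow> (posX a \<longrightarrow> sem G Om sb P E a \<subseteq> sem G Om sb P E' a) \<and>
     (negX a \<longrightarrow> sem G Om sb P E' a \<subseteq> sem G Om sb P E a)"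
proof (induction a)
  case (Opt i f a)
  have r1: "\<forall>j. restr sb (sem G Om sb P E a) j \<subseteq> restr sb (sem G Om sb P E' a) j"
    if "posX a" using Opt that unfolding restr_def by (meson image_mono)
  have r2: "\<forall>j. restr sb (sem G Om sb P E' a) j \<subseteq> restr sb (sem G Om sb P E a) j"
    if "negX a" using Opt that unfolding restr_def by (meson image_mono)
  show ?case
  proof (cases "occX a")
    case True
    have p: "opos f \<Longrightarrow> (\<forall>j. G1 j \<subseteq> G2 j) \<Longrightarrow> omodels G G1 s f \<Longrightarrow> omodels G G2 s f"
      for G1 G2 s using osat_mono unfolding omodels_def by blast
    show ?thesis
    proof (intro conjI impI)
      assume "posX (Opt i f a)"
      then have "posX a" "opos f" using True by auto
      then show "sem G Om sb P E (Opt i f a) \<subseteq> sem G Om sb P E' (Opt i f a)"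
        using r1 p by (simp only: sem.simps) blast
    next
      assume "negX (Opt i f a)"
      then have "negX a" "opos f" using True by auto
      then show "sem G Om sb P E' (Opt i f a) \<subseteq> sem G Om sb P E (Opt i f a)"
        using r2 p by (simp only: sem.simps) blast
    qed
  next
    case False
    then show ?thesis using sem_noocc[OF False, of G Om sb P E E'] by simp
  qed
next
  case (Box i a) then show ?case by (simp only: sem.simps posX.simps negX.simps) blast
next
  case (Not a) then show ?case by (simp only: sem.simps posX.simps negX.simps) blast
next
  case (And a b) then show ?case by (simp only: sem.simps posX.simps negX.simps) blast
qed simp_all

theorem mainTheorem8:
  fixes G :: "('p::finite, 's) game"
    and Om :: "'w set"
    and sb :: "'p \<Rightarrow> 'w \<Rightarrow> 's"
    and P :: "'p \<Rightarrow> 'w \<Rightarrow> 'w set"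
    and psi :: "'p lnu"
  assumes "lnu_formula psi"
    and "posX psi"
    and "belief_model G Om sb P"
  shows "mono_on (Pow Om) (\<lambda>E. sem G Om sb P E psi)
    \<and> (lnu_formula (Nu psi) \<longrightarrow>
        (\<forall>E'\<subseteq>Om. sem G Om sb P E' (Nu psi) = \<Union>{E. E \<subseteq> Om \<and> E \<subseteq> sem G Om sb P E psi}))"
proof -
  have mono: "\<And>E E'. E \<subseteq> E' \<Longrightarrow> sem G Om sb P E psi \<subseteq> sem G Om sb P E' psi"
    using sem_mono[of _ _ psi G Om sb P] assms(2) by simp
  define f where "f = (\<lambda>F. sem G Om sb P F psi \<inter> F)"
  define Z where "Z = \<Union>{E. E \<subseteq> Om \<and> E \<subseteq> sem G Om sb P E psi}"
  have Zsub: "Z \<subseteq> Om" unfolding Z_def by auto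
  have Zpost: "Z \<subseteq> sem G Om sb P Z psi"
  proof
    fix x assume "x \<in> Z"
    then obtain E where E: "E \<subseteq> Om" "E \<subseteq> sem G Om sb P E psi" "x \<in> E" unfolding Z_def by auto
    have "E \<subseteq> Z" using E unfolding Z_def by auto
    then show "x \<in> sem G Om sb P Z psi" using mono E by blast
  qed
  have Zst: "F \<in> iter_stages f Om \<Longrightarrow> Z \<subseteq> F" for F
  proof (induction rule: iter_stages.induct)
    case start then show ?case using Zsub .
  next
    case (step F)
    then show ?case using Zpost mono[of Z F] unfolding f_def by auto
  next
    case (limit S) then show ?case by auto
  qed
  define O' where "O' = iter_outcome f Om"
  have Ost: "O' \<in> iter_stages f Om" unfolding O'_def iter_outcome_def
    by (rule iter_stages.limit) (auto intro: iter_stages.start)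
  have "f O' \<in> iter_stages f Om" using Ost by (rule iter_stages.step)
  then have "O' \<subseteq> f O'" unfolding O'_def iter_outcome_def by auto
  then have Opost: "O' \<subseteq> sem G Om sb P O' psi" unfolding f_def by auto
  have "O' \<subseteq> Om" unfolding O'_def iter_outcome_def using iter_stages.start by auto
  then have "O' \<subseteq> Z" using Opost unfolding Z_def by auto
  moreover have "Z \<subseteq> O'" using Zst unfolding O'_def iter_outcome_def by auto
  ultimately have "O' = Z" by auto
  then have "\<forall>E'\<subseteq>Om. sem G Om sb P E' (Nu psi) = Z"
    unfolding O'_def f_def by simp
  moreover have "mono_on (Pow Om) (\<lambda>E. sem G Om sb P E psi)"
    by (rule mono_onI) (use mono in auto)
  ultimately show ?thesis unfolding Z_def by (intro conjI impI)
qed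

end
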